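(* Let $P(o,o'\mid b,b')$, with inputs $b,b'\in\{0,1\}$ and outputs $o,o'\in\{\mathrm{accept},\mathrm{reject}\}$, be a conditional probability distribution satisfying no-signalling in both directions, i.e. $\sum_{o'}P(o,o'\mid b,b')$ does not depend on $b'$ and $\sum_{o}P(o,o'\mid b,b')$ does not depend on $b$. Define $p_d := P(\mathrm{accept},\mathrm{accept}\mid b=d,b'=d)$ for $d\in\{0,1\}$ and $\alpha := P(\mathrm{accept},\mathrm{accept}\mid b=0,b'=1)$. Then $p_0+p_1\le 1+\alpha$.
   Context: Interpretation: $b$ and $b'$ are the bits that two non-communicating agents (Bob and Brian) are instructed to open, and $o$, $o'$ are the outcomes of Alice's separate acceptance tests on Bob's and on Brian's opening, respectively. *)

theory Defs
  imports Main "HOL-Analysis.Analysis"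
begin

(* Inputs b, b' are bits (bool: False = 0, True = 1); outputs o, o' are
   bool with True = accept, False = reject.  P o o' b b' = P(o,o' | b,b'). *)

definition cond_prob_dist :: "(bool \<Rightarrow> bool \<Rightarrow> bool \<Rightarrow> bool \<Rightarrow> real) \<Rightarrow> bool" where
  "cond_prob_dist P \<longleftrightarrow>
     (\<forall>o1 o2 b b'. P o1 o2 b b' \<ge> 0) \<and>
     (\<forall>b b'. (\<Sum>o1\<in>UNIV. \<Sum>o2\<in>UNIV. P o1 o2 b b') = 1)"

definition no_signalling :: "(bool \<Rightarrow> bool \<Rightarrow> bool \<Rightarrow> bool \<Rightarrow> real) \<Rightarrow> bool" where
  "no_signalling P \<longleftrightarrow>
     (\<forall>o1 b b1 b2. (\<Sum>o2\<in>UNIV. P o1 o2 b b1) = (\<Sum>o2\<in>UNIV. P o1 o2 b b2)) \<and>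
     (\<forall>o2 b' b1 b2. (\<Sum>o1\<in>UNIV. P o1 o2 b1 b') = (\<Sum>o1\<in>UNIV. P o1 o2 b2 b'))"

end

theory Submission
  imports Defs
begin

lemma sum_bool: "(\<Sum>x\<in>(UNIV::bool set). f x) = f True + f False"
  by (simp add: UNIV_bool add.commute)

theorem lemma1:
  fixes P :: "bool \<Rightarrow> bool \<Rightarrow> bool \<Rightarrow> bool \<Rightarrow> real"
  assumes "cond_prob_dist P"
    and "no_signalling P"
  shows "P True True False False + P True True True True \<le> 1 + P True True False True"
proof -
  have nn: "\<And>a b c d. P a b c d \<ge> 0" using assms(1) by (auto simp: cond_prob_dist_def)
  have n1: "P True True False True + P True False False True + P False True False True + P False False False True = 1"
    using assms(1) unfolding cond_prob_dist_def sum_bool by (auto simp: algebra_simps)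
  have a: "P True True False False + P True False False False = P True True False True + P True False False True"
    using assms(2) unfolding no_signalling_def sum_bool by metis
  have b: "P True True True True + P False True True True = P True True False True + P False True False True"
    using assms(2) unfolding no_signalling_def sum_bool by metis
  show ?thesis using nn[of True False False False] nn[of False True True True] nn[of False False False True] n1 a b
    by linarith
qed

end
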